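(* Let $p>1$ and $\alpha,\beta>0$, and consider the operators $\mathcal{C}_\alpha$ and $\mathcal{C}_\beta^*$ on $L^p(\mathbb{R}^+)$. Then $\mathcal{C}_\alpha\mathcal{C}_\beta^*=\mathcal{C}_\beta^*\mathcal{C}_\alpha$, and for $f\in L^p(\mathbb{R}^+)$ and almost every $t>0$, $$(\mathcal{C}_\alpha\mathcal{C}_\beta^* )f(t)=\alpha\int_0^t f(r)\frac{1}{t-r}\Big(\frac{t-r}{t}\Big)^{\alpha+\beta}{}_2F_1\Big(\alpha+\beta,\beta;\beta+1;\frac rt\Big)dr+\beta\int_t^\infty f(r)\frac{1}{r-t}\Big(\frac{r-t}{r}\Big)^{\alpha+\beta}{}_2F_1\Big(\alpha+\beta,\alpha;\alpha+1;\frac tr\Big)dr.$$ In particular, for $f\in L^p(\mathbb{R}^+)$ and almost every $t>0$, $$(\mathcal{C}_1\mathcal{C}_\beta^* )f(t)=\mathcal{C}_1f(t)+\beta\int_t^\infty f(r)\frac{(r-t)^\beta}{r^{\beta+1}}\,{}_2F_1\Big(\beta+1,1;2;\frac tr\Big)dr,$$ $$(\mathcal{C}_\alpha\mathcal{C}_1^* )f(t)=\alpha\int_0^t f(r)\frac{(t-r)^\alpha}{t^{\alpha+1}}\,{}_2F_1\Big(\alpha+1,1;2;\frac rt\Big)dr+\mathcal{C}_1^*f(t),$$ and $\mathcal{C}_1\mathcal{C}_1^*f=\mathcal{C}_1f+\mathcal{C}_1^*f=\mathcal{C}_1^*\mathcal{C}_1f$.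
   Context: For $\gamma>0$ the generalized Cesàro operators on $L^p(\mathbb{R}^+)$ are $\mathcal{C}_\gamma f(t)=\frac{\gamma}{t^\gamma}\int_0^t(t-s)^{\gamma-1}f(s)\,ds$ and $\mathcal{C}_\gamma^*f(t)=\gamma\int_t^\infty\frac{(s-t)^{\gamma-1}}{s^\gamma}f(s)\,ds$ for $t>0$; they are bounded on $L^p(\mathbb{R}^+)$ for $p>1$. ${}_2F_1$ is the Gaussian hypergeometric function ${}_2F_1(a,b;c;z)=\frac{\Gamma(c)}{\Gamma(a)\Gamma(b)}\sum_{n\ge0}\frac{\Gamma(a+n)\Gamma(b+n)}{\Gamma(c+n)}\frac{z^n}{n!}$. *)

theory Defs
  imports "HOL-Analysis.Analysis"
begin

text \<open>Functions on \<open>\<real>\<^sup>+ = (0,\<infinity>)\<close> are represented as complex-valued functions on \<open>\<real>\<close>;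
  their values at \<open>t \<le> 0\<close> are irrelevant.\<close>

definition Lp_pos :: "real \<Rightarrow> (real \<Rightarrow> complex) \<Rightarrow> bool" where
  "Lp_pos p f \<longleftrightarrow> f \<in> borel_measurable lborel \<and>
     set_integrable lborel {0<..} (\<lambda>t. norm (f t) powr p)"

definition Ces :: "real \<Rightarrow> (real \<Rightarrow> complex) \<Rightarrow> real \<Rightarrow> complex" where
  "Ces \<gamma> f t = complex_of_real (\<gamma> / t powr \<gamma>) *
     (LINT s:{0<..<t}|lborel. complex_of_real ((t - s) powr (\<gamma> - 1)) * f s)"

definition Ces_star :: "real \<Rightarrow> (real \<Rightarrow> complex) \<Rightarrow> real \<Rightarrow> complex" where
  "Ces_star \<gamma> f t = complex_of_real \<gamma> *
     (LINT s:{t<..}|lborel. complex_of_real ((s - t) powr (\<gamma> - 1) / s powr \<gamma>) * f s)"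

definition hyp2F1 :: "real \<Rightarrow> real \<Rightarrow> real \<Rightarrow> real \<Rightarrow> real" where
  "hyp2F1 a b c z = Gamma c / (Gamma a * Gamma b) *
     (\<Sum>n. Gamma (a + real n) * Gamma (b + real n) / Gamma (c + real n) * z ^ n / fact n)"

end

theory Submission
  imports Defs
begin


lemma ftc_left:
  fixes c u v :: real assumes c: "c > 0" and uv: "u \<le> v"
  shows "((\<lambda>x. (v-x) powr (c-1)) has_integral ((v-u) powr c / c)) {u..v}"
proof -
  define F where "F x = - ((v-x) powr c / c)" for x
  have "((\<lambda>x. (v-x) powr (c-1)) has_integral (F v - F u)) {u..v}"
  proof (rule fundamental_theorem_of_calculus_interior[OF uv])
    show "continuous_on {u..v} F" unfolding F_def using c
      by (intro continuous_intros continuous_on_powr') auto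
    fix x assume x: "x \<in> {u<..<v}"
    show "(F has_vector_derivative (v - x) powr (c - 1)) (at x)"
      unfolding F_def has_real_derivative_iff_has_vector_derivative[symmetric]
      using x c by (auto intro!: derivative_eq_intros simp: field_simps)
  qed
  thus ?thesis using c by (simp add: F_def)
qed

lemma ftc_right:
  fixes c u v :: real assumes c: "c > 0" and uv: "u \<le> v"
  shows "((\<lambda>x. (x-u) powr (c-1)) has_integral ((v-u) powr c / c)) {u..v}"
proof -
  define F where "F x = ((x-u) powr c / c)" for x
  have "((\<lambda>x. (x-u) powr (c-1)) has_integral (F v - F u)) {u..v}"
  proof (rule fundamental_theorem_of_calculus_interior[OF uv])
    show "continuous_on {u..v} F" unfolding F_def using c
      by (intro continuous_intros continuous_on_powr') auto
    fix x assume x: "x \<in> {u<..<v}"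
    show "(F has_vector_derivative (x - u) powr (c - 1)) (at x)"
      unfolding F_def has_real_derivative_iff_has_vector_derivative[symmetric]
      using x c by (auto intro!: derivative_eq_intros simp: field_simps)
  qed
  thus ?thesis using c by (simp add: F_def)
qed

lemma nn_ftc_left:
  fixes c u v :: real assumes c: "c > 0" and uv: "u \<le> v"
  shows "(\<integral>\<^sup>+x\<in>{u..v}. ennreal ((v-x) powr (c-1)) \<partial>lborel) = ennreal ((v-u) powr c / c)"
  by (rule nn_integral_has_integral_lebesgue'[OF _ ftc_left[OF c uv]]) auto

lemma nn_ftc_right:
  fixes c u v :: real assumes c: "c > 0" and uv: "u \<le> v"
  shows "(\<integral>\<^sup>+x\<in>{u..v}. ennreal ((x-u) powr (c-1)) \<partial>lborel) = ennreal ((v-u) powr c / c)"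
  by (rule nn_integral_has_integral_lebesgue'[OF _ ftc_right[OF c uv]]) auto

lemma nn_powr_inf:
  fixes e a :: real assumes "e < -1" "a > 0"
  shows "(\<integral>\<^sup>+x\<in>{a..}. ennreal (x powr e) \<partial>lborel) = ennreal (-(a powr (e+1)) / (e+1))"
  by (rule nn_integral_has_integral_lebesgue'[OF _ has_integral_powr_to_inf[OF assms]]) auto

lemma nn_Ioo_Icc:
  fixes u v :: real
  shows "(\<integral>\<^sup>+x\<in>{u<..<v}. g x \<partial>lborel) = (\<integral>\<^sup>+x\<in>{u..v}. g x \<partial>lborel)"
  apply (rule nn_integral_cong_AE)
  using AE_lborel_singleton[of u] AE_lborel_singleton[of v]
  by eventually_elim (auto simp: indicator_def)

lemma nn_Ioi_Ici:
  fixes u :: real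
  shows "(\<integral>\<^sup>+x\<in>{u<..}. g x \<partial>lborel) = (\<integral>\<^sup>+x\<in>{u..}. g x \<partial>lborel)"
  apply (rule nn_integral_cong_AE)
  using AE_lborel_singleton[of u]
  by eventually_elim (auto simp: indicator_def)

lemma nn_Ioc_Icc:
  fixes u v :: real
  shows "(\<integral>\<^sup>+x\<in>{u<..v}. g x \<partial>lborel) = (\<integral>\<^sup>+x\<in>{u..v}. g x \<partial>lborel)"
  apply (rule nn_integral_cong_AE)
  using AE_lborel_singleton[of u]
  by eventually_elim (auto simp: indicator_def)



definition Jn :: "real \<Rightarrow> real \<Rightarrow> real \<Rightarrow> real \<Rightarrow> ennreal" where
  "Jn a b t r = (\<integral>\<^sup>+s\<in>{0<..<min t r}. ennreal ((t-s) powr (a-1) * (r-s) powr (b-1)) \<partial>lborel)"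

definition EE :: "real \<Rightarrow> real \<Rightarrow> real \<Rightarrow> real" where
  "EE A b x = (\<Sum>n. pochhammer A n / fact n * x^n / (b + real n))"

lemma gchoose_neg: "((-A) gchoose n) * (-y)^n = pochhammer A n / fact n * (y::real)^n"
proof -
  have 1: "(-y)^n = (-1)^n * y^n" by (rule power_minus)
  have 2: "((-A) gchoose n) = (-1)^n * pochhammer A n / fact n" by (simp add: gbinomial_pochhammer)
  have 3: "(-1::real)^n * (-1)^n = ((-1)*(-1))^n" by (rule power_mult_distrib[symmetric])
  have "((-A) gchoose n) * (-y)^n = ((-1::real)^n * (-1)^n) * (pochhammer A n / fact n * y^n)"
    unfolding 1 2 by (simp only: mult_ac times_divide_eq_left times_divide_eq_right)
  thus ?thesis unfolding 3 by simp
qed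

lemma neg_binomial:
  fixes y A :: real assumes "0 \<le> y" "y < 1"
  shows "(\<lambda>n. pochhammer A n / fact n * y^n) sums ((1-y) powr (-A))"
proof -
  have "\<bar>-y\<bar> < 1" using assms by simp
  from gen_binomial_real[OF this, of "-A"]
  have "(\<lambda>n. ((-A) gchoose n) * (-y)^n) sums ((1 + -y) powr (-A))" .
  thus ?thesis unfolding gchoose_neg by simp
qed

lemma poch_nonneg: "A > 0 \<Longrightarrow> pochhammer A n \<ge> (0::real)"
  by (simp add: pochhammer_nonneg)

lemma EE_summable:
  fixes A b x :: real assumes A: "A > 0" and b: "b > 0" and x: "0 \<le> x" "x < 1"
  shows "summable (\<lambda>n. pochhammer A n / fact n * x^n / (b + real n))"
proof (rule summable_comparison_test)
  show "summable (\<lambda>n. pochhammer A n / fact n * x^n / b)"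
    using neg_binomial[OF x, of A] by (intro summable_divide) (auto simp: sums_iff)
  show "\<exists>N. \<forall>n\<ge>N. norm (pochhammer A n / fact n * x ^ n / (b + real n)) \<le> pochhammer A n / fact n * x ^ n / b"
  proof (intro exI[of _ 0] allI impI)
    fix n :: nat
    have 0: "0 \<le> pochhammer A n / fact n * x ^ n" using A x by (simp add: poch_nonneg)
    moreover have "b \<le> b + real n" by simp
    ultimately have "pochhammer A n / fact n * x ^ n / (b + real n) \<le> pochhammer A n / fact n * x ^ n / b"
      using b by (intro divide_left_mono) auto
    moreover have "norm (pochhammer A n / fact n * x ^ n / (b + real n)) = pochhammer A n / fact n * x ^ n / (b + real n)"
      unfolding real_norm_def by (rule abs_of_nonneg, rule divide_nonneg_nonneg) (use 0 b in auto)
    ultimately show "norm (pochhammer A n / fact n * x ^ n / (b + real n)) \<le> pochhammer A n / fact n * x ^ n / b"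
      by simp
  qed
qed

lemma EE_nonneg: "A > 0 \<Longrightarrow> b > 0 \<Longrightarrow> 0 \<le> x \<Longrightarrow> x < 1 \<Longrightarrow> EE A b x \<ge> 0"
  unfolding EE_def by (intro suminf_nonneg EE_summable) (auto simp: poch_nonneg)

lemma powr_mult_pow: "(z::real) \<ge> 0 \<Longrightarrow> z powr c * z ^ n = z powr (c + real n)"
  by (cases "z = 0") (auto simp: powr_add powr_realpow)

lemma euler_integral:
  fixes A b x :: real assumes A: "A > 0" and b: "b > 0" and x: "0 \<le> x" "x < 1"
  shows "(\<integral>\<^sup>+v\<in>{0..1}. ennreal ((1-v) powr (b-1) * (1 - x*(1-v)) powr (-A)) \<partial>lborel)
          = ennreal (EE A b x)"
proof -
  define c where "c n = pochhammer A n / fact n * x^n" for n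
  have c0: "c n \<ge> 0" for n using A x by (auto simp: c_def poch_nonneg)
  have pt: "ennreal ((1-v) powr (b-1) * (1 - x*(1-v)) powr (-A)) * indicator {0..1} v
      = (\<Sum>n. ennreal (c n * (1-v) powr (b - 1 + real n)) * indicator {0..1} v)" for v
  proof (cases "v \<in> {0..1}")
    case True
    have y: "0 \<le> x*(1-v)" "x*(1-v) < 1" using True x
      by (auto intro: mult_nonneg_nonneg) (smt (verit) mult_left_le)
    have "(\<lambda>n. (1-v) powr (b-1) * (c n * (1-v)^n)) sums ((1-v) powr (b-1) * (1 - x*(1-v)) powr (-A))"
      using neg_binomial[OF y, of A] by (intro sums_mult) (simp add: c_def power_mult_distrib mult_ac)
    moreover have "(1-v) powr (b-1) * (c n * (1-v)^n) = c n * (1-v) powr (b - 1 + real n)" for n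
      using True powr_mult_pow[of "1-v" "b-1" n] by (simp add: mult_ac)
    ultimately have "(\<lambda>n. c n * (1-v) powr (b - 1 + real n)) sums ((1-v) powr (b-1) * (1 - x*(1-v)) powr (-A))"
      by simp
    hence "(\<Sum>n. ennreal (c n * (1-v) powr (b - 1 + real n))) = ennreal ((1-v) powr (b-1) * (1 - x*(1-v)) powr (-A))"
      by (rule suminf_ennreal_eq[rotated]) (use c0 in auto)
    thus ?thesis using True by simp
  qed simp
  have "(\<integral>\<^sup>+v\<in>{0..1}. ennreal ((1-v) powr (b-1) * (1 - x*(1-v)) powr (-A)) \<partial>lborel)
      = (\<Sum>n. \<integral>\<^sup>+v. ennreal (c n * (1-v) powr (b - 1 + real n)) * indicator {0..1} v \<partial>lborel)"
    unfolding pt by (rule nn_integral_suminf) auto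
  also have "\<dots> = (\<Sum>n. ennreal (c n / (b + real n)))"
  proof (rule suminf_cong)
    fix n
    have "(\<integral>\<^sup>+v. ennreal (c n * (1-v) powr (b - 1 + real n)) * indicator {0..1} v \<partial>lborel)
        = (\<integral>\<^sup>+v. ennreal (c n) * (ennreal ((1-v) powr ((b + real n) - 1)) * indicator {0..1} v) \<partial>lborel)"
      by (intro nn_integral_cong) (simp add: ennreal_mult' c0 mult_ac diff_add_eq)
    also have "\<dots> = ennreal (c n) * (\<integral>\<^sup>+v\<in>{0..1}. ennreal ((1-v) powr ((b + real n) - 1)) \<partial>lborel)"
      by (rule nn_integral_cmult) auto
    also have "\<dots> = ennreal (c n) * ennreal ((1 - 0) powr (b + real n) / (b + real n))"
      using b by (subst nn_ftc_left) auto
    also have "\<dots> = ennreal (c n / (b + real n))"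
      using b c0 by (simp add: ennreal_mult'[symmetric])
    finally show "(\<integral>\<^sup>+v. ennreal (c n * (1-v) powr (b - 1 + real n)) * indicator {0..1} v \<partial>lborel) = ennreal (c n / (b + real n))" .
  qed
  also have "\<dots> = ennreal (EE A b x)"
  proof (rule suminf_ennreal_eq)
    show "0 \<le> c n / (b + real n)" for n using c0[of n] b by (intro divide_nonneg_nonneg) auto
    show "(\<lambda>n. c n / (b + real n)) sums EE A b x"
      unfolding EE_def c_def using EE_summable[OF A b x] by (rule summable_sums)
  qed
  finally show ?thesis .
qed



lemma alg1:
  fixes T R Q D u a b :: real
  assumes pos: "T > 0" "R > 0" "Q > 0" "D > 0" "u > 0"
  shows "(T*Q/D) powr (a-1) * (R*Q*u/D) powr (b-1) * (R*T*Q/D^2)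
       = T powr a * R powr b * Q powr (a+b-1) * T powr (-(a+b)) * (u powr (b-1) * (D/T) powr (-(a+b)))"
proof -
  have "ln ((T*Q/D) powr (a-1) * (R*Q*u/D) powr (b-1) * (R*T*Q/D^2))
      = ln (T powr a * R powr b * Q powr (a+b-1) * T powr (-(a+b)) * (u powr (b-1) * (D/T) powr (-(a+b))))"
    using pos by (simp add: ln_mult ln_div ln_powr ln_realpow algebra_simps)
  thus ?thesis using pos by (subst (asm) ln_inj_iff) auto
qed

lemma Jn_formula:
  fixes a b t r :: real
  assumes a: "a > 0" and b: "b > 0" and r: "0 < r" and rt: "r < t"
  shows "Jn a b t r = ennreal (t powr a * r powr b * (t-r) powr (a+b-1) * t powr (-(a+b))) * ennreal (EE (a+b) b (r/t))"
proof -
  define \<phi> where "\<phi> s = (t-s) powr (a-1) * (r-s) powr (b-1)" for s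
  define g where "g v = r*t* v/(t-r+r* v)" for v
  define g' where "g' v = r*t*(t-r)/(t-r+r* v)^2" for v
  define K where "K = t powr a * r powr b * (t-r) powr (a+b-1) * t powr (-(a+b))"
  define \<psi> where "\<psi> v = (1-v) powr (b-1) * (1 - (r/t)*(1-v)) powr (-(a+b))" for v
  have D: "t-r+r* v > 0" if "v \<in> {0..1}" for v using that r rt
    by (smt (verit) atLeastAtMost_iff mult_nonneg_nonneg)
  have "Jn a b t r = (\<integral>\<^sup>+s\<in>{0..r}. ennreal (\<phi> s) \<partial>lborel)"
    unfolding Jn_def \<phi>_def using rt by (simp add: nn_Ioo_Icc)
  also have "\<dots> = (\<integral>\<^sup>+s. ennreal (\<phi> s) * indicator {g 0..g 1} s \<partial>lborel)"
    using rt r by (simp add: g_def)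
  also have "\<dots> = (\<integral>\<^sup>+v. ennreal (\<phi> (g v)) * ennreal (g' v) * indicator {0..1} v \<partial>lborel)"
  proof (rule nn_integral_substitution_aux)
    show "(\<lambda>s. ennreal (\<phi> s)) \<in> borel_measurable borel" unfolding \<phi>_def by measurable
    show "(g has_real_derivative g' v) (at v)" if "v \<in> {0..1}" for v
      using D[OF that] unfolding g_def g'_def
      by (auto intro!: derivative_eq_intros simp: field_simps power2_eq_square)
    show "continuous_on {0..1} g'" unfolding g'_def using D
      by (intro continuous_intros) (use D in \<open>fastforce\<close>)
    show "g' v \<ge> 0" if "v \<in> {0..1}" for v unfolding g'_def using r rt by auto
  qed auto
  also have "\<dots> = (\<integral>\<^sup>+v. ennreal K * (ennreal (\<psi> v) * indicator {0..1} v) \<partial>lborel)"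
  proof (intro nn_integral_cong)
    fix v :: real
    show "ennreal (\<phi> (g v)) * ennreal (g' v) * indicator {0..1} v = ennreal K * (ennreal (\<psi> v) * indicator {0..1} v)"
    proof (cases "v \<in> {0..1}")
      case True
      note Dv = D[OF True]
      have g'0: "g' v \<ge> 0" unfolding g'_def using r rt by auto
      have "\<phi> (g v) * g' v = K * \<psi> v"
      proof (cases "v = 1")
        case True
        thus ?thesis using rt by (simp add: \<phi>_def \<psi>_def g_def)
      next
        case False
        with True have u: "1 - v > 0" by auto
        have e1: "t - g v = t*(t-r)/(t-r+r* v)" unfolding g_def using Dv by (simp add: field_simps)
        have e2: "r - g v = r*(t-r)*(1-v)/(t-r+r* v)" unfolding g_def using Dv by (simp add: field_simps)
        have e3: "1 - (r/t)*(1-v) = (t-r+r* v)/t" using rt r by (simp add: field_simps)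
        show ?thesis unfolding \<phi>_def \<psi>_def K_def e1 e2 e3 g'_def
          using alg1[of t r "t-r" "t-r+r* v" "1-v" a b] u Dv r rt by (simp add: mult_ac)
      qed
      moreover have "\<phi> (g v) \<ge> 0" unfolding \<phi>_def by simp
      moreover have "K \<ge> 0" "\<psi> v \<ge> 0" unfolding K_def \<psi>_def by auto
      ultimately show ?thesis using g'0 True by (simp add: ennreal_mult'[symmetric] ennreal_mult[symmetric])
    qed simp
  qed
  also have "\<dots> = ennreal K * (\<integral>\<^sup>+v\<in>{0..1}. ennreal (\<psi> v) \<partial>lborel)"
    by (rule nn_integral_cmult) (auto simp: \<psi>_def)
  also have "(\<integral>\<^sup>+v\<in>{0..1}. ennreal (\<psi> v) \<partial>lborel) = ennreal (EE (a+b) b (r/t))"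
    unfolding \<psi>_def by (rule euler_integral) (use a b r rt in auto)
  finally show ?thesis by (simp add: K_def)
qed



lemma hyp_EE:
  fixes A b x :: real assumes A: "A > 0" and b: "b > 0" and x: "0 \<le> x" "x < 1"
  shows "hyp2F1 A b (b+1) x = b * EE A b x"
proof -
  have nz: "b + real n \<notin> \<int>\<^sub>\<le>\<^sub>0" for n using b
    using nonpos_Ints_nonpos[of "b + real n"] by fastforce
  have nzA: "A \<notin> \<int>\<^sub>\<le>\<^sub>0" using A nonpos_Ints_nonpos by fastforce
  have nzb: "b \<notin> \<int>\<^sub>\<le>\<^sub>0" using b nonpos_Ints_nonpos by fastforce
  have GA: "Gamma A > 0" "Gamma b > 0" using A b by auto
  have trm: "Gamma (A + real n) * Gamma (b + real n) / Gamma (b + 1 + real n) * x ^ n / fact n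
      = Gamma A * (pochhammer A n / fact n * x^n / (b + real n))" for n
  proof -
    have g1: "Gamma (b + 1 + real n) = (b + real n) * Gamma (b + real n)"
      using Gamma_plus1[OF nz[of n]] by (simp add: add_ac)
    have g2: "Gamma (A + real n) = pochhammer A n * Gamma A"
      using pochhammer_Gamma[OF nzA, of n] GA by simp
    have g3: "Gamma (b + real n) \<noteq> 0" using b by (intro less_imp_neq[symmetric] Gamma_real_pos) auto
    have g4: "b + real n \<noteq> 0" using b by simp
    have gen: "\<And>P GA G B X F::real. G \<noteq> 0 \<Longrightarrow> B \<noteq> 0 \<Longrightarrow> F \<noteq> 0 \<Longrightarrow>
       P * GA * G / (B * G) * X / F = GA * (P / F * X / B)" by (simp add: field_simps)
    show ?thesis unfolding g1 g2 by (rule gen[OF g3 g4]) simp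
  qed
  have "(\<Sum>n. Gamma (A + real n) * Gamma (b + real n) / Gamma (b + 1 + real n) * x ^ n / fact n)
      = (\<Sum>n. Gamma A * (pochhammer A n / fact n * x^n / (b + real n)))"
    by (simp only: trm)
  also have "\<dots> = Gamma A * EE A b x"
    unfolding EE_def by (rule suminf_mult[OF EE_summable[OF A b x]])
  finally have S: "(\<Sum>n. Gamma (A + real n) * Gamma (b + real n) / Gamma (b + 1 + real n) * x ^ n / fact n) = Gamma A * EE A b x" .
  have Gb: "Gamma (b + 1) = b * Gamma b" using Gamma_plus1[OF nzb] .
  show ?thesis unfolding hyp2F1_def S Gb using GA by (simp add: field_simps)
qed

lemma alg2:
  fixes T R Q a b :: real
  assumes pos: "T > 0" "R > 0" "Q > 0" "a > 0" "b > 0"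
  shows "a*b/T powr a * (R powr (-b) * (T powr a * R powr b * Q powr (a+b-1) * T powr (-(a+b))))
       = a * (1/Q * (Q/T) powr (a+b)) * b"
proof -
  have "ln (a*b/T powr a * (R powr (-b) * (T powr a * R powr b * Q powr (a+b-1) * T powr (-(a+b)))))
      = ln (a * (1/Q * (Q/T) powr (a+b)) * b)"
    using pos by (simp add: ln_mult ln_div ln_powr algebra_simps)
  thus ?thesis using pos by (subst (asm) ln_inj_iff) auto
qed

lemma KL:
  fixes a b t r :: real
  assumes a: "a > 0" and b: "b > 0" and r: "0 < r" and rt: "r < t"
  shows "a*b/t powr a * (r powr (-b) * enn2real (Jn a b t r))
       = a * (1/(t-r) * ((t-r)/t) powr (a+b) * hyp2F1 (a+b) b (b+1) (r/t))"
proof -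
  have x: "0 \<le> r/t" "r/t < 1" using r rt by auto
  have E0: "EE (a+b) b (r/t) \<ge> 0" using EE_nonneg[of "a+b" b "r/t"] a b x by auto
  have "enn2real (Jn a b t r) = (t powr a * r powr b * (t-r) powr (a+b-1) * t powr (-(a+b))) * EE (a+b) b (r/t)"
    unfolding Jn_formula[OF a b r rt] using E0 by (simp add: enn2real_mult)
  moreover have "hyp2F1 (a+b) b (b+1) (r/t) = b * EE (a+b) b (r/t)"
    by (rule hyp_EE) (use a b x in auto)
  ultimately show ?thesis using alg2[of t r "t-r" a b] a b r rt
    by (simp only: mult.assoc[symmetric])
qed

lemma Jn_sym: "Jn a b t r = Jn b a r t"
  unfolding Jn_def by (simp add: min.commute mult.commute)

lemma Jn_1:
  fixes b t r :: real assumes b: "b > 0" and r: "0 < r" and rt: "r < t"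
  shows "Jn 1 b t r = ennreal (r powr b / b)"
proof -
  have "Jn 1 b t r = (\<integral>\<^sup>+s\<in>{0<..<r}. ennreal ((r-s) powr (b-1)) \<partial>lborel)"
    unfolding Jn_def using rt by (intro nn_integral_cong) (auto simp: indicator_def)
  also have "\<dots> = ennreal ((r-0) powr b / b)"
    by (subst nn_Ioo_Icc, rule nn_ftc_left) (use b r in auto)
  finally show ?thesis by simp
qed

lemma K1_lt:
  fixes b t r :: real assumes b: "b > 0" and r: "0 < r" and rt: "r < t"
  shows "1*b/t powr 1 * (r powr (-b) * enn2real (Jn 1 b t r)) = 1/t"
  using b r rt by (simp add: Jn_1 powr_minus field_simps)

lemma K1_gt:
  fixes a t r :: real assumes a: "a > 0" and t: "0 < t" and rt: "t < r"
  shows "a*1/t powr a * (r powr (-1) * enn2real (Jn a 1 t r)) = 1/r"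
  using a t rt by (simp add: Jn_sym[of a 1] Jn_1 powr_minus field_simps)

lemma KG:
  fixes a b t r :: real
  assumes a: "a > 0" and b: "b > 0" and t: "0 < t" and rt: "t < r"
  shows "a*b/t powr a * (r powr (-b) * enn2real (Jn a b t r))
       = b * (1/(r-t) * ((r-t)/r) powr (a+b) * hyp2F1 (a+b) a (a+1) (t/r))"
proof -
  have "b*a/r powr b * (t powr (-a) * enn2real (Jn b a r t))
       = b * (1/(r-t) * ((r-t)/r) powr (b+a) * hyp2F1 (b+a) a (a+1) (t/r))"
    by (rule KL) (use a b t rt in auto)
  thus ?thesis using t rt by (simp add: Jn_sym[of a b] add.commute powr_minus field_simps)
qed



definition Lk :: "real \<Rightarrow> real \<Rightarrow> real \<Rightarrow> real \<Rightarrow> ennreal" where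
  "Lk a b t r = (\<integral>\<^sup>+s\<in>{max t r<..}. ennreal ((s-t) powr (b-1) / s powr b * (1 / s powr a) * (s-r) powr (a-1)) \<partial>lborel)"

lemma alg3:
  fixes T R U P Q a b :: real
  assumes pos: "T > 0" "R > 0" "U > 0" "P > 0" "Q > 0"
  shows "(T*P/U) powr (b-1) / (T*R/U) powr b * (1 / (T*R/U) powr a) * (R*Q/U) powr (a-1) * (T*R/U^2)
       = T powr (-a) * R powr (-b) * (Q powr (a-1) * P powr (b-1))"
proof -
  have "ln ((T*P/U) powr (b-1) / (T*R/U) powr b * (1 / (T*R/U) powr a) * (R*Q/U) powr (a-1) * (T*R/U^2))
      = ln (T powr (-a) * R powr (-b) * (Q powr (a-1) * P powr (b-1)))"
    using pos by (simp add: ln_mult ln_div ln_powr ln_realpow algebra_simps)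
  thus ?thesis using pos by (subst (asm) ln_inj_iff) auto
qed

lemma mono_lim:
  fixes F :: "real \<Rightarrow> ennreal" and A :: "nat \<Rightarrow> real set"
  assumes F[measurable]: "F \<in> borel_measurable borel" and inc: "incseq A"
    and As[measurable]: "\<And>n. A n \<in> sets borel" and U: "(\<Union>n. A n) = S"
  shows "(SUP n. \<integral>\<^sup>+x. F x * indicator (A n) x \<partial>lborel) = (\<integral>\<^sup>+x. F x * indicator S x \<partial>lborel)"
proof -
  have "(\<integral>\<^sup>+x. F x * indicator S x \<partial>lborel) = (\<integral>\<^sup>+x. (SUP n. F x * indicator (A n) x) \<partial>lborel)"
  proof (intro nn_integral_cong)
    fix x
    show "F x * indicator S x = (SUP n. F x * indicator (A n) x)"
    proof (cases "x \<in> S")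
      case True
      then obtain N where N: "x \<in> A N" using U by auto
      show ?thesis
      proof (rule antisym)
        show "F x * indicator S x \<le> (SUP n. F x * indicator (A n) x)"
          using True N by (intro SUP_upper2[of N]) auto
        show "(SUP n. F x * indicator (A n) x) \<le> F x * indicator S x"
          using True by (intro SUP_least) (auto simp: indicator_def)
      qed
    next
      case False
      hence "x \<notin> A n" for n using U by auto
      thus ?thesis using False by simp
    qed
  qed
  also have "\<dots> = (SUP n. \<integral>\<^sup>+x. F x * indicator (A n) x \<partial>lborel)"
  proof (rule nn_integral_monotone_convergence_SUP)
    show "incseq (\<lambda>n x. F x * indicator (A n) x)"
      using inc by (auto simp: incseq_def le_fun_def indicator_def intro: mult_left_mono)
  qed simp
  finally show ?thesis by simp
qed

lemma Lk_Jn: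
  fixes a b t r :: real
  assumes t: "t > 0" and r: "r > 0"
  shows "Lk a b t r = ennreal (t powr (-a) * r powr (-b)) * Jn a b t r"
proof -
  define m where "m = min t r"
  define M where "M = max t r"
  have m: "m > 0" "m \<le> M" using t r by (auto simp: m_def M_def)
  have mM: "t * r = m * M" by (auto simp: m_def M_def min_def max_def)
  define L where "L s = (s-t) powr (b-1) / s powr b * (1 / s powr a) * (s-r) powr (a-1)" for s
  define J where "J u = (t-u) powr (a-1) * (r-u) powr (b-1)" for u
  define C where "C = t powr (-a) * r powr (-b)"
  have C0: "C \<ge> 0" by (simp add: C_def)
  define e where "e n = m / (real n + 2)" for n :: nat
  have e: "0 < e n" "e n < m" for n
  proof -
    have "m * 1 < m * (real n + 2)" using m by (intro mult_strict_left_mono) auto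
    thus "0 < e n" "e n < m" using m by (auto simp: e_def divide_less_eq)
  qed
  have step: "(\<integral>\<^sup>+s. ennreal (L s) * indicator {M..(real n+2)*M} s \<partial>lborel)
       = (\<integral>\<^sup>+u. ennreal (C * J u) * indicator {e n..m} u \<partial>lborel)" for n
  proof -
    define g where "g x = - (t*r) / x" for x :: real
    define g' where "g' x = t*r / x^2" for x :: real
    have gm: "g (-m) = M" using m mM by (simp add: g_def)
    have ge: "g (-e n) = (real n+2)*M" using m mM by (simp add: g_def e_def field_simps)
    have "(\<integral>\<^sup>+s. ennreal (L s) * indicator {M..(real n+2)*M} s \<partial>lborel)
        = (\<integral>\<^sup>+s. ennreal (L s) * indicator {g (-m)..g (-e n)} s \<partial>lborel)" by (simp only: gm ge)
    also have "\<dots> = (\<integral>\<^sup>+x. ennreal (L (g x)) * ennreal (g' x) * indicator {-m..-e n} x \<partial>lborel)"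
    proof (rule nn_integral_substitution_aux)
      show "(\<lambda>s. ennreal (L s)) \<in> borel_measurable borel" unfolding L_def by measurable
      show "(g has_real_derivative g' x) (at x)" if "x \<in> {-m..-e n}" for x
      proof -
        have "x < 0" using that e[of n] by auto
        thus ?thesis unfolding g_def g'_def
          by (auto intro!: derivative_eq_intros simp: field_simps power2_eq_square)
      qed
      show "continuous_on {-m..-e n} g'" unfolding g'_def using e[of n]
        by (intro continuous_intros) auto
      show "g' x \<ge> 0" if "x \<in> {-m..-e n}" for x unfolding g'_def using t r by auto
      show "- m < - e n" using e[of n] by simp
    qed simp
    also have "\<dots> = (\<integral>\<^sup>+x. ennreal (C * J (-x)) * indicator {-m..-e n} x \<partial>lborel)"
    proof (intro nn_integral_cong)
      fix x :: real
      show "ennreal (L (g x)) * ennreal (g' x) * indicator {-m..-e n} x = ennreal (C * J (-x)) * indicator {-m..-e n} x"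
      proof (cases "x \<in> {-m..-e n}")
        case True
        define U where "U = -x"
        have U: "U > 0" "U \<le> m" "U \<le> t" "U \<le> r" using True e[of n] by (auto simp: U_def m_def)
        have gx: "g x = t*r/U" and g'x: "g' x = t*r/U^2" by (simp_all add: g_def g'_def U_def)
        have e1: "t*r/U - t = t*(r-U)/U" and e2: "t*r/U - r = r*(t-U)/U" using U by (simp_all add: field_simps)
        have "L (g x) * g' x = C * J (-x)"
        proof (cases "U = t \<or> U = r")
          case True
          thus ?thesis unfolding gx g'x L_def J_def C_def U_def[symmetric] using U t r
            by (auto simp: e1 e2)
        next
          case False
          hence P: "r - U > 0" "t - U > 0" using U by auto
          show ?thesis unfolding gx g'x L_def J_def C_def U_def[symmetric] e1 e2
            using alg3[where T=t and R=r and U=U and P="r-U" and Q="t-U" and a=a and b=b] P U t r by simp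
        qed
        moreover have "L (g x) \<ge> 0" "g' x \<ge> 0" "C * J (-x) \<ge> 0"
          unfolding L_def g'_def J_def using C0 t r by auto
        ultimately show ?thesis using True by (simp add: ennreal_mult[symmetric])
      qed simp
    qed
    also have "\<dots> = (\<integral>\<^sup>+u. ennreal (C * J u) * indicator {e n..m} u \<partial>lborel)"
    proof -
      define F where "F u = ennreal (C * J u) * indicator {e n..m} u" for u
      have Fm: "F \<in> borel_measurable borel" unfolding F_def J_def by measurable
      have "(\<integral>\<^sup>+u. ennreal (C * J u) * indicator {e n..m} u \<partial>lborel) = (\<integral>\<^sup>+u. F u \<partial>lborel)"
        by (simp add: F_def)
      also have "\<dots> = (\<integral>\<^sup>+x. F (- x) \<partial>lborel)"
        using nn_integral_real_affine[where f=F and c="-1" and t=0, OF Fm] by simp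
      also have "\<dots> = (\<integral>\<^sup>+x. ennreal (C * J (-x)) * indicator {-m..-e n} x \<partial>lborel)"
        by (intro nn_integral_cong) (auto simp: indicator_def F_def)
      finally show ?thesis by simp
    qed
    finally show ?thesis .
  qed
  have lim1: "(SUP n. \<integral>\<^sup>+s. ennreal (L s) * indicator {M..(real n+2)*M} s \<partial>lborel)
      = (\<integral>\<^sup>+s. ennreal (L s) * indicator {M..} s \<partial>lborel)"
  proof (rule mono_lim)
    show "(\<lambda>s. ennreal (L s)) \<in> borel_measurable borel" unfolding L_def by measurable
    show "incseq (\<lambda>n. {M..(real n+2)*M})" using m
      by (auto simp: incseq_def intro!: mult_right_mono)
    show "(\<Union>n. {M..(real n+2)*M}) = {M..}"
    proof (intro antisym subsetI)
      fix s assume "s \<in> {M..}"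
      obtain n :: nat where "s / M \<le> real n" using real_arch_simple by blast
      hence "s \<le> (real n+2)*M" using m by (simp add: field_simps)
      thus "s \<in> (\<Union>n. {M..(real n+2)*M})" using \<open>s \<in> {M..}\<close> by auto
    qed auto
  qed simp
  have lim2: "(SUP n. \<integral>\<^sup>+u. ennreal (C * J u) * indicator {e n..m} u \<partial>lborel)
      = (\<integral>\<^sup>+u. ennreal (C * J u) * indicator {0<..m} u \<partial>lborel)"
  proof (rule mono_lim)
    show "(\<lambda>u. ennreal (C * J u)) \<in> borel_measurable borel" unfolding J_def by measurable
    show "incseq (\<lambda>n. {e n..m})" using m
      by (auto simp: incseq_def e_def intro!: divide_left_mono)
    show "(\<Union>n. {e n..m}) = {0<..m}"
    proof (intro antisym subsetI)
      fix u assume u: "u \<in> {0<..m}"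
      obtain n :: nat where "m / u \<le> real n" using real_arch_simple by blast
      hence "e n \<le> u" using u m by (simp add: e_def field_simps)
      thus "u \<in> (\<Union>n. {e n..m})" using u by auto
    next
      fix u assume "u \<in> (\<Union>n. {e n..m})"
      thus "u \<in> {0<..m}" using e by (auto dest: order.strict_trans2)
    qed
  qed simp
  have "Lk a b t r = (\<integral>\<^sup>+s. ennreal (L s) * indicator {M..} s \<partial>lborel)"
    unfolding Lk_def L_def M_def by (rule nn_Ioi_Ici)
  also have "\<dots> = (\<integral>\<^sup>+u. ennreal (C * J u) * indicator {0<..m} u \<partial>lborel)"
    using step lim1 lim2 by simp
  also have "\<dots> = (\<integral>\<^sup>+u. ennreal C * (ennreal (J u) * indicator {0<..<m} u) \<partial>lborel)"
  proof -
    have "(\<integral>\<^sup>+u. ennreal (C * J u) * indicator {0<..m} u \<partial>lborel) = (\<integral>\<^sup>+u. ennreal (C * J u) * indicator {0<..<m} u \<partial>lborel)"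
      by (simp add: nn_Ioo_Icc nn_Ioc_Icc)
    also have "\<dots> = (\<integral>\<^sup>+u. ennreal C * (ennreal (J u) * indicator {0<..<m} u) \<partial>lborel)"
      using C0 by (intro nn_integral_cong) (simp add: ennreal_mult J_def mult_ac)
    finally show ?thesis .
  qed
  also have "\<dots> = ennreal C * Jn a b t r"
    unfolding Jn_def J_def m_def by (rule nn_integral_cmult) simp
  finally show ?thesis by (simp add: C_def)
qed



definition H :: "real \<Rightarrow> real \<Rightarrow> real \<Rightarrow> real \<Rightarrow> real \<Rightarrow> real" where
  "H a b t r s = (if 0 < s \<and> s < t \<and> s < r then (t-s) powr (a-1) * (r-s) powr (b-1) else 0)"

lemma H_nonneg: "H a b t r s \<ge> 0" unfolding H_def by auto

lemma Jn_H: "Jn a b t r = (\<integral>\<^sup>+s. ennreal (H a b t r s) \<partial>lborel)"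
  unfolding Jn_def H_def by (intro nn_integral_cong) (auto simp: indicator_def)

lemma Jn_nonpos: assumes "r \<le> 0" shows "Jn a b t r = 0"
proof -
  have "Jn a b t r = (\<integral>\<^sup>+s. 0 \<partial>(lborel::real measure))"
    unfolding Jn_H by (intro nn_integral_cong) (use assms in \<open>auto simp: H_def\<close>)
  thus ?thesis by simp
qed

definition N :: "real \<Rightarrow> real \<Rightarrow> (real \<Rightarrow> complex) \<Rightarrow> real \<Rightarrow> ennreal" where
  "N a b f t = (\<integral>\<^sup>+r. \<integral>\<^sup>+s. ennreal (norm (f r) * r powr (-b) * H a b t r s) \<partial>lborel \<partial>lborel)"

lemma N_Jn: "N a b f t = (\<integral>\<^sup>+r. ennreal (norm (f r) * r powr (-b)) * Jn a b t r \<partial>lborel)"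
proof -
  have "(\<integral>\<^sup>+s. ennreal (norm (f r) * r powr (-b) * H a b t r s) \<partial>lborel)
      = ennreal (norm (f r) * r powr (-b)) * Jn a b t r" for r
  proof -
    have "(\<integral>\<^sup>+s. ennreal (norm (f r) * r powr (-b) * H a b t r s) \<partial>lborel)
        = (\<integral>\<^sup>+s. ennreal (norm (f r) * r powr (-b)) * ennreal (H a b t r s) \<partial>lborel)"
      by (intro nn_integral_cong) (simp add: ennreal_mult H_nonneg)
    also have "\<dots> = ennreal (norm (f r) * r powr (-b)) * (\<integral>\<^sup>+s. ennreal (H a b t r s) \<partial>lborel)"
      by (rule nn_integral_cmult) (simp add: H_def)
    finally show ?thesis by (simp add: Jn_H)
  qed
  thus ?thesis unfolding N_def by simp
qed

lemma inner_t_bound: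
  fixes a b B r s :: real assumes a: "a > 0" and B: "B > 0"
  shows "(\<integral>\<^sup>+t. ennreal (H a b t r s) * indicator {0<..<B} t \<partial>lborel)
       \<le> ennreal (B powr a / a) * ennreal (H 1 b B r s)"
proof (cases "0 < s \<and> s < r \<and> s < B")
  case True
  have "(\<integral>\<^sup>+t. ennreal (H a b t r s) * indicator {0<..<B} t \<partial>lborel)
      = (\<integral>\<^sup>+t. ennreal ((r-s) powr (b-1)) * (ennreal ((t-s) powr (a-1)) * indicator {s<..<B} t) \<partial>lborel)"
    using True by (intro nn_integral_cong) (auto simp: H_def indicator_def ennreal_mult mult_ac)
  also have "\<dots> = ennreal ((r-s) powr (b-1)) * (\<integral>\<^sup>+t\<in>{s<..<B}. ennreal ((t-s) powr (a-1)) \<partial>lborel)"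
    by (rule nn_integral_cmult) simp
  also have "(\<integral>\<^sup>+t\<in>{s<..<B}. ennreal ((t-s) powr (a-1)) \<partial>lborel) = ennreal ((B-s) powr a / a)"
    by (subst nn_Ioo_Icc, rule nn_ftc_right) (use a True in auto)
  also have "ennreal ((r-s) powr (b-1)) * ennreal ((B-s) powr a / a) \<le> ennreal ((r-s) powr (b-1)) * ennreal (B powr a / a)"
  proof (intro mult_left_mono ennreal_leI divide_right_mono powr_mono2)
  qed (use a True in auto)
  also have "\<dots> = ennreal (B powr a / a) * ennreal (H 1 b B r s)"
    using True by (simp add: H_def mult_ac)
  finally show ?thesis .
next
  case False
  have "(\<integral>\<^sup>+t. ennreal (H a b t r s) * indicator {0<..<B} t \<partial>lborel) = (\<integral>\<^sup>+t. 0 \<partial>(lborel::real measure))"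
    by (intro nn_integral_cong) (use False in \<open>auto simp: H_def indicator_def\<close>)
  thus ?thesis by simp
qed

lemma int_N_bound:
  fixes f :: "real \<Rightarrow> complex"
  assumes a: "a > 0" and B: "B > 0" and fm[measurable]: "f \<in> borel_measurable lborel"
  shows "(\<integral>\<^sup>+t. N a b f t * indicator {0<..<B} t \<partial>lborel) \<le> ennreal (B powr a / a) * N 1 b f B"
proof -
  have "(\<integral>\<^sup>+t. N a b f t * indicator {0<..<B} t \<partial>lborel)
      = (\<integral>\<^sup>+t. \<integral>\<^sup>+r. \<integral>\<^sup>+s. ennreal (norm (f r) * r powr (-b) * H a b t r s) * indicator {0<..<B} t \<partial>lborel \<partial>lborel \<partial>lborel)"
    unfolding N_def
    by (intro nn_integral_cong, subst nn_integral_multc[symmetric], (unfold H_def, measurable)[1],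
        intro nn_integral_cong, subst nn_integral_multc[symmetric], (unfold H_def, measurable)[1], simp)
  also have "\<dots> = (\<integral>\<^sup>+r. \<integral>\<^sup>+t. \<integral>\<^sup>+s. ennreal (norm (f r) * r powr (-b) * H a b t r s) * indicator {0<..<B} t \<partial>lborel \<partial>lborel \<partial>lborel)"
    by (rule lborel_pair.Fubini'[symmetric]) (unfold H_def, measurable)
  also have "\<dots> \<le> (\<integral>\<^sup>+r. ennreal (norm (f r) * r powr (-b)) * (ennreal (B powr a / a) * Jn 1 b B r) \<partial>lborel)"
  proof (intro nn_integral_mono)
    fix r :: real
    define c where "c = norm (f r) * r powr (-b)"
    have c0: "c \<ge> 0" by (simp add: c_def)
    have "(\<integral>\<^sup>+t. \<integral>\<^sup>+s. ennreal (c * H a b t r s) * indicator {0<..<B} t \<partial>lborel \<partial>lborel)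
        = (\<integral>\<^sup>+t. \<integral>\<^sup>+s. ennreal c * (ennreal (H a b t r s) * indicator {0<..<B} t) \<partial>lborel \<partial>lborel)"
      using c0 by (intro nn_integral_cong) (simp add: ennreal_mult H_nonneg mult_ac)
    also have "\<dots> = (\<integral>\<^sup>+s. \<integral>\<^sup>+t. ennreal c * (ennreal (H a b t r s) * indicator {0<..<B} t) \<partial>lborel \<partial>lborel)"
      by (rule lborel_pair.Fubini') (unfold H_def, measurable)
    also have "\<dots> = (\<integral>\<^sup>+s. ennreal c * (\<integral>\<^sup>+t. ennreal (H a b t r s) * indicator {0<..<B} t \<partial>lborel) \<partial>lborel)"
      by (intro nn_integral_cong nn_integral_cmult) (unfold H_def, measurable)
    also have "\<dots> \<le> (\<integral>\<^sup>+s. ennreal c * (ennreal (B powr a / a) * ennreal (H 1 b B r s)) \<partial>lborel)"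
      by (intro nn_integral_mono mult_left_mono inner_t_bound a B) auto
    also have "\<dots> = ennreal c * (ennreal (B powr a / a) * Jn 1 b B r)"
      unfolding Jn_H
      by (subst nn_integral_cmult, (unfold H_def, measurable)[1], subst nn_integral_cmult, (unfold H_def, measurable)[1]) simp
    finally show "(\<integral>\<^sup>+t. \<integral>\<^sup>+s. ennreal (norm (f r) * r powr (-b) * H a b t r s) * indicator {0<..<B} t \<partial>lborel \<partial>lborel)
        \<le> ennreal (norm (f r) * r powr (-b)) * (ennreal (B powr a / a) * Jn 1 b B r)"
      by (simp add: c_def)
  qed
  also have "\<dots> = (\<integral>\<^sup>+r. ennreal (B powr a / a) * (ennreal (norm (f r) * r powr (-b)) * Jn 1 b B r) \<partial>lborel)"
    by (simp add: mult_ac)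
  also have "\<dots> = ennreal (B powr a / a) * N 1 b f B"
    unfolding N_Jn Jn_H by (rule nn_integral_cmult) (unfold H_def, measurable)
  finally show ?thesis .
qed



definition Cb :: "real \<Rightarrow> real" where "Cb b = max 1 (2 powr (1-b))"
definition hfun :: "real \<Rightarrow> real \<Rightarrow> real \<Rightarrow> real" where
  "hfun b B r = (if r < 2*B then 1/b else B * Cb b / r)"

lemma hfun_nonneg: "b > 0 \<Longrightarrow> B > 0 \<Longrightarrow> r > 0 \<Longrightarrow> hfun b B r \<ge> 0"
  unfolding hfun_def Cb_def by auto

lemma far_bound:
  fixes b B r s :: real assumes b: "b > 0" and s: "0 < s" "s < B" and r: "2*B \<le> r"
  shows "(r-s) powr (b-1) \<le> Cb b * r powr (b-1)"
proof -
  have rs: "r/2 \<le> r - s" "r - s \<le> r" "r/2 > 0" using s r by auto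
  show ?thesis
  proof (cases "b \<ge> 1")
    case True
    have "(r-s) powr (b-1) \<le> r powr (b-1)" using rs True by (intro powr_mono2) auto
    also have "\<dots> \<le> Cb b * r powr (b-1)"
      using mult_right_mono[of 1 "Cb b" "r powr (b-1)"] by (simp add: Cb_def)
    finally show ?thesis .
  next
    case False
    have "(r-s) powr (b-1) \<le> (r/2) powr (b-1)" using rs False by (intro powr_mono2') auto
    also have "\<dots> = 2 powr (1-b) * r powr (b-1)"
      using rs by (simp add: powr_divide powr_diff powr_minus_divide field_simps)
    also have "\<dots> \<le> Cb b * r powr (b-1)" by (intro mult_right_mono) (auto simp: Cb_def)
    finally show ?thesis .
  qed
qed

lemma Jn1_bound:
  fixes b B r :: real assumes b: "b > 0" and B: "B > 0" and r: "r > 0"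
  shows "Jn 1 b B r \<le> ennreal (r powr b * hfun b B r)"
proof (cases "r < 2*B")
  case True
  have "Jn 1 b B r \<le> (\<integral>\<^sup>+s. ennreal ((r-s) powr (b-1)) * indicator {0<..<r} s \<partial>lborel)"
    unfolding Jn_H by (intro nn_integral_mono) (auto simp: H_def indicator_def)
  also have "\<dots> = ennreal ((r-0) powr b / b)"
    by (subst nn_Ioo_Icc, rule nn_ftc_left) (use b r in auto)
  finally show ?thesis using True by (simp add: hfun_def)
next
  case False
  have "Jn 1 b B r \<le> (\<integral>\<^sup>+s. ennreal (Cb b * r powr (b-1)) * indicator {0<..<B} s \<partial>lborel)"
    unfolding Jn_H
  proof (intro nn_integral_mono)
    fix s
    show "ennreal (H 1 b B r s) \<le> ennreal (Cb b * r powr (b - 1)) * indicator {0<..<B} s"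
    proof (cases "0 < s \<and> s < B")
      case True
      with False have "s < r" by auto
      have "H 1 b B r s = (r-s) powr (b-1)" using True \<open>s < r\<close> by (simp add: H_def)
      also have "\<dots> \<le> Cb b * r powr (b-1)" using far_bound[of b s B r] b True False by auto
      finally show ?thesis using True by (simp add: ennreal_leI)
    qed (auto simp: H_def)
  qed
  also have "\<dots> = ennreal (Cb b * r powr (b-1)) * ennreal B"
    using B by (simp add: nn_integral_cmult_indicator)
  also have "\<dots> = ennreal (r powr b * hfun b B r)"
  proof -
    have "Cb b * r powr (b-1) * B = r powr b * hfun b B r"
      using False r by (simp add: hfun_def powr_diff field_simps)
    moreover have "Cb b * r powr (b-1) \<ge> 0" by (auto simp: Cb_def)
    ultimately show ?thesis using B by (simp add: ennreal_mult[symmetric])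
  qed
  finally show ?thesis .
qed

lemma young2:
  fixes p x y :: real assumes p: "p > 1" and x: "x \<ge> 0" and y: "y \<ge> 0"
  shows "x * y \<le> x powr p + y powr (p/(p-1))"
proof -
  define q where "q = p/(p-1)"
  have q: "q > 1" using p by (simp add: q_def field_simps)
  have pq: "1/p + 1/q = 1" using p by (simp add: q_def field_simps)
  have "x * y \<le> x powr p / p + y powr q / q" by (rule Youngs_inequality[OF p q pq x y])
  also have "\<dots> \<le> x powr p + y powr q"
    using p q by (intro add_mono) (simp_all add: divide_le_eq mult_le_cancel_left1)
  finally show ?thesis by (simp add: q_def)
qed

lemma Lp_nn:
  assumes "Lp_pos p f"
  shows "(\<integral>\<^sup>+r. ennreal (norm (f r) powr p) * indicator {0<..} r \<partial>lborel) < \<infinity>"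
proof -
  have "integrable lborel (\<lambda>x. indicator {0<..} x *\<^sub>R (norm (f x) powr p))"
    using assms unfolding Lp_pos_def set_integrable_def by simp
  from this[unfolded integrable_iff_bounded]
  have "(\<integral>\<^sup>+x. ennreal (norm (indicator {0<..} x *\<^sub>R (norm (f x) powr p))) \<partial>lborel) < \<infinity>" by blast
  moreover have "(\<integral>\<^sup>+x. ennreal (norm (indicator {0<..} x *\<^sub>R (norm (f x) powr p))) \<partial>lborel)
      = (\<integral>\<^sup>+r. ennreal (norm (f r) powr p) * indicator {0<..} r \<partial>lborel)"
    by (intro nn_integral_cong) (auto simp: indicator_def)
  ultimately show ?thesis by simp
qed

lemma N1_finite:
  fixes f :: "real \<Rightarrow> complex"
  assumes p: "p > 1" and b: "b > 0" and B: "B > 0" and f: "Lp_pos p f"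
  shows "N 1 b f B < \<infinity>"
proof -
  have fm[measurable]: "f \<in> borel_measurable lborel" using f by (simp add: Lp_pos_def)
  define q where "q = p/(p-1)"
  have q: "q > 1" using p by (simp add: q_def field_simps)
  have "N 1 b f B \<le> (\<integral>\<^sup>+r. ennreal (norm (f r) powr p) * indicator {0<..} r
                          + ennreal (hfun b B r powr q) * indicator {0<..} r \<partial>lborel)"
    unfolding N_Jn
  proof (intro nn_integral_mono)
    fix r :: real
    show "ennreal (norm (f r) * r powr (-b)) * Jn 1 b B r
        \<le> ennreal (norm (f r) powr p) * indicator {0<..} r + ennreal (hfun b B r powr q) * indicator {0<..} r"
    proof (cases "r > 0")
      case True
      have "ennreal (norm (f r) * r powr (-b)) * Jn 1 b B r
          \<le> ennreal (norm (f r) * r powr (-b)) * ennreal (r powr b * hfun b B r)"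
        by (intro mult_left_mono Jn1_bound b B True) auto
      also have "\<dots> = ennreal (norm (f r) * hfun b B r)"
      proof -
        have "r powr (-b) * r powr b = 1" using True by (simp add: powr_add[symmetric])
        hence e: "norm (f r) * r powr (-b) * (r powr b * hfun b B r) = norm (f r) * hfun b B r"
          by (simp add: algebra_simps)
        show ?thesis
          using ennreal_mult'[of "norm (f r) * r powr (-b)" "r powr b * hfun b B r"] e by simp
      qed
      also have "\<dots> \<le> ennreal (norm (f r) powr p + hfun b B r powr q)"
        unfolding q_def by (intro ennreal_leI young2 p hfun_nonneg b B True) auto
      also have "\<dots> = ennreal (norm (f r) powr p) * indicator {0<..} r + ennreal (hfun b B r powr q) * indicator {0<..} r"
        using True by (simp add: ennreal_plus)
      finally show ?thesis .
    next
      case False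
      thus ?thesis by (simp add: Jn_nonpos)
    qed
  qed
  also have "\<dots> = (\<integral>\<^sup>+r. ennreal (norm (f r) powr p) * indicator {0<..} r \<partial>lborel)
                 + (\<integral>\<^sup>+r. ennreal (hfun b B r powr q) * indicator {0<..} r \<partial>lborel)"
    by (rule nn_integral_add) (auto simp: hfun_def)
  also have "\<dots> < \<infinity>"
  proof -
    have A: "(\<integral>\<^sup>+r. ennreal (norm (f r) powr p) * indicator {0<..} r \<partial>lborel) < \<infinity>"
      by (rule Lp_nn[OF f])
    have "(\<integral>\<^sup>+r. ennreal (hfun b B r powr q) * indicator {0<..} r \<partial>lborel)
        \<le> (\<integral>\<^sup>+r. ennreal ((1/b) powr q) * indicator {0<..<2*B} r
               + ennreal ((B * Cb b) powr q) * (ennreal (r powr (-q)) * indicator {2*B..} r) \<partial>lborel)"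
    proof (intro nn_integral_mono)
      fix r :: real
      show "ennreal (hfun b B r powr q) * indicator {0<..} r
          \<le> ennreal ((1/b) powr q) * indicator {0<..<2*B} r
               + ennreal ((B * Cb b) powr q) * (ennreal (r powr (-q)) * indicator {2*B..} r)"
      proof (cases "r > 0")
        case True
        show ?thesis
        proof (cases "r < 2*B")
          case True
          thus ?thesis using \<open>r > 0\<close> by (simp add: hfun_def)
        next
          case False
          have "hfun b B r powr q = (B * Cb b) powr q * r powr (-q)"
            using False B \<open>r > 0\<close> by (simp add: hfun_def powr_divide powr_minus_divide Cb_def)
          thus ?thesis using False \<open>r > 0\<close> B by (simp add: ennreal_mult[symmetric] Cb_def)
        qed
      qed simp
    qed
    also have "\<dots> = ennreal ((1/b) powr q) * emeasure lborel {0<..<2*B}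
               + ennreal ((B * Cb b) powr q) * (\<integral>\<^sup>+r\<in>{2*B..}. ennreal (r powr (-q)) \<partial>lborel)"
      by (subst nn_integral_add) (auto simp: nn_integral_cmult_indicator nn_integral_cmult)
    also have "\<dots> < \<infinity>"
      using B q by (simp add: nn_powr_inf ennreal_mult_less_top ennreal_mult[symmetric])
    finally have "(\<integral>\<^sup>+r. ennreal (hfun b B r powr q) * indicator {0<..} r \<partial>lborel) < \<infinity>" .
    thus ?thesis using A by (simp add: infinity_ennreal_def)
  qed
  finally show ?thesis .
qed

lemma N_AE:
  fixes f :: "real \<Rightarrow> complex"
  assumes p: "p > 1" and a: "a > 0" and b: "b > 0" and f: "Lp_pos p f"
  shows "AE t in lborel. 0 < t \<longrightarrow> N a b f t \<noteq> \<infinity>"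
proof -
  have fm[measurable]: "f \<in> borel_measurable lborel" using f by (simp add: Lp_pos_def)
  have "AE t in lborel. N a b f t * indicator {0<..<real (Suc n)} t \<noteq> \<infinity>" for n
  proof (rule nn_integral_PInf_AE)
    show "(\<lambda>t. N a b f t * indicator {0<..<real (Suc n)} t) \<in> borel_measurable lborel"
      unfolding N_def H_def by measurable
    have "(\<integral>\<^sup>+t. N a b f t * indicator {0<..<real (Suc n)} t \<partial>lborel) \<le> ennreal (real (Suc n) powr a / a) * N 1 b f (real (Suc n))"
      by (rule int_N_bound[OF a _ fm]) simp
    also have "\<dots> < \<infinity>" using N1_finite[OF p b _ f, of "real (Suc n)"] by (simp add: ennreal_mult_less_top)
    finally show "(\<integral>\<^sup>+t. N a b f t * indicator {0<..<real (Suc n)} t \<partial>lborel) \<noteq> \<infinity>" by simp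
  qed
  hence "AE t in lborel. \<forall>n. N a b f t * indicator {0<..<real (Suc n)} t \<noteq> \<infinity>"
    by (simp add: AE_all_countable)
  thus ?thesis
  proof (eventually_elim)
    case (elim t)
    show ?case
    proof
      assume t: "0 < t"
      obtain n :: nat where "t < real n" using reals_Archimedean2 by blast
      hence "t \<in> {0<..<real (Suc n)}" using t by auto
      thus "N a b f t \<noteq> \<infinity>" using elim[rule_format, of n] by simp
    qed
  qed
qed



lemma int_ofreal_mult: "(\<integral>s. complex_of_real (h s) * c \<partial>M) = complex_of_real (integral\<^sup>L M h) * c"
  by simp

lemma int_H: "(\<integral>s. H a b t r s \<partial>lborel) = enn2real (Jn a b t r)"
  unfolding Jn_H by (rule integral_eq_nn_integral) (auto simp: H_def)

definition kJ :: "real \<Rightarrow> real \<Rightarrow> real \<Rightarrow> real \<Rightarrow> real" where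
  "kJ a b t r = r powr (-b) * enn2real (Jn a b t r)"

lemma kJ_nonpos: "r \<le> 0 \<Longrightarrow> kJ a b t r = 0"
  by (simp add: kJ_def Jn_nonpos)

definition Phi1 :: "real \<Rightarrow> real \<Rightarrow> real \<Rightarrow> (real \<Rightarrow> complex) \<Rightarrow> real \<Rightarrow> real \<Rightarrow> complex" where
  "Phi1 a b t f s r = (if 0 < s \<and> s < t \<and> s < r then
       complex_of_real ((t-s) powr (a-1) * ((r-s) powr (b-1) / r powr b)) * f r else 0)"

lemma Phi1_alt: "Phi1 a b t f s r = complex_of_real (H a b t r s) * (complex_of_real (r powr (-b)) * f r)"
  unfolding Phi1_def H_def by (auto simp: powr_minus_divide)

lemma Ces_Ces_star_eq:
  fixes f :: "real \<Rightarrow> complex"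
  shows "Ces a (Ces_star b f) t = complex_of_real (a / t powr a) * (complex_of_real b * (\<integral>s. \<integral>r. Phi1 a b t f s r \<partial>lborel \<partial>lborel))"
proof -
  have "indicator {0<..<t} s *\<^sub>R (complex_of_real ((t - s) powr (a - 1)) * Ces_star b f s)
      = complex_of_real b * (\<integral>r. Phi1 a b t f s r \<partial>lborel)" for s
  proof (cases "s \<in> {0<..<t}")
    case True
    have "indicator {0<..<t} s *\<^sub>R (complex_of_real ((t - s) powr (a - 1)) * Ces_star b f s)
        = complex_of_real b * (complex_of_real ((t - s) powr (a - 1)) *
            (\<integral>r. indicator {s<..} r *\<^sub>R (complex_of_real ((r - s) powr (b - 1) / r powr b) * f r) \<partial>lborel))"
      using True by (simp add: Ces_star_def set_lebesgue_integral_def mult_ac)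
    also have "(complex_of_real ((t - s) powr (a - 1)) *
            (\<integral>r. indicator {s<..} r *\<^sub>R (complex_of_real ((r - s) powr (b - 1) / r powr b) * f r) \<partial>lborel))
        = (\<integral>r. complex_of_real ((t - s) powr (a - 1)) * (indicator {s<..} r *\<^sub>R (complex_of_real ((r - s) powr (b - 1) / r powr b) * f r)) \<partial>lborel)"
      by (rule integral_mult_right_zero[symmetric])
    also have "\<dots> = (\<integral>r. Phi1 a b t f s r \<partial>lborel)"
      using True by (intro Bochner_Integration.integral_cong) (auto simp: Phi1_def indicator_def)
    finally show ?thesis .
  next
    case False
    hence "Phi1 a b t f s r = 0" for r by (auto simp: Phi1_def)
    thus ?thesis using False by simp
  qed
  hence "(LINT s:{0<..<t}|lborel. complex_of_real ((t - s) powr (a - 1)) * Ces_star b f s)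
      = (\<integral>s. complex_of_real b * (\<integral>r. Phi1 a b t f s r \<partial>lborel) \<partial>lborel)"
    unfolding set_lebesgue_integral_def by simp
  also have "\<dots> = complex_of_real b * (\<integral>s. \<integral>r. Phi1 a b t f s r \<partial>lborel \<partial>lborel)" by simp
  finally show ?thesis unfolding Ces_def by simp
qed

lemma Phi1_meas[measurable]:
  fixes f :: "real \<Rightarrow> complex"
  assumes [measurable]: "f \<in> borel_measurable lborel"
  shows "(\<lambda>(s, r). Phi1 a b t f s r) \<in> borel_measurable (lborel \<Otimes>\<^sub>M lborel)"
  unfolding Phi1_def by measurable

lemma Phi1_integrable:
  fixes f :: "real \<Rightarrow> complex"
  assumes fm[measurable]: "f \<in> borel_measurable lborel" and Nf: "N a b f t \<noteq> \<infinity>"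
  shows "integrable (lborel \<Otimes>\<^sub>M lborel) (\<lambda>(s, r). Phi1 a b t f s r)"
proof (rule integrableI_bounded)
  show "(\<lambda>(s, r). Phi1 a b t f s r) \<in> borel_measurable (lborel \<Otimes>\<^sub>M lborel)" by (rule Phi1_meas[OF fm])
  have m: "(\<lambda>x. ennreal (norm (case x of (s, r) \<Rightarrow> Phi1 a b t f s r))) \<in> borel_measurable (lborel \<Otimes>\<^sub>M lborel)"
    using Phi1_meas[OF fm] by measurable
  have "(\<integral>\<^sup>+x. ennreal (norm (case x of (s, r) \<Rightarrow> Phi1 a b t f s r)) \<partial>(lborel \<Otimes>\<^sub>M lborel))
      = (\<integral>\<^sup>+r. \<integral>\<^sup>+s. ennreal (norm (Phi1 a b t f s r)) \<partial>lborel \<partial>lborel)"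
    using lborel_pair.nn_integral_snd[OF m] by simp
  also have "\<dots> = N a b f t"
    unfolding N_def
  proof (intro nn_integral_cong)
    fix r s :: real
    have "norm (Phi1 a b t f s r) = H a b t r s * (r powr (-b) * norm (f r))"
      unfolding Phi1_alt norm_mult norm_of_real abs_of_nonneg[OF H_nonneg] by simp
    thus "ennreal (norm (Phi1 a b t f s r)) = ennreal (norm (f r) * r powr (-b) * H a b t r s)"
      by (simp only: mult_ac)
  qed
  finally show "(\<integral>\<^sup>+x. ennreal (norm (case x of (s, r) \<Rightarrow> Phi1 a b t f s r)) \<partial>(lborel \<Otimes>\<^sub>M lborel)) < \<infinity>"
    using Nf by (simp add: less_top)
qed

lemma Phi1_inner: "(\<integral>s. Phi1 a b t f s r \<partial>lborel) = f r * complex_of_real (kJ a b t r)"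
  unfolding Phi1_alt int_ofreal_mult int_H kJ_def by (simp add: mult_ac)

lemma master1:
  fixes f :: "real \<Rightarrow> complex"
  assumes fm[measurable]: "f \<in> borel_measurable lborel" and Nf: "N a b f t \<noteq> \<infinity>"
  shows "Ces a (Ces_star b f) t = complex_of_real (a * b / t powr a) * (\<integral>r. f r * complex_of_real (kJ a b t r) \<partial>lborel)"
    and "integrable lborel (\<lambda>r. f r * complex_of_real (kJ a b t r))"
proof -
  note I = Phi1_integrable[OF fm Nf]
  have "(\<integral>s. \<integral>r. Phi1 a b t f s r \<partial>lborel \<partial>lborel) = (\<integral>r. \<integral>s. Phi1 a b t f s r \<partial>lborel \<partial>lborel)"
    using lborel_pair.Fubini_integral[OF I] by simp
  also have "\<dots> = (\<integral>r. f r * complex_of_real (kJ a b t r) \<partial>lborel)"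
    by (simp add: Phi1_inner)
  finally show "Ces a (Ces_star b f) t = complex_of_real (a * b / t powr a) * (\<integral>r. f r * complex_of_real (kJ a b t r) \<partial>lborel)"
    unfolding Ces_Ces_star_eq by simp
  show "integrable lborel (\<lambda>r. f r * complex_of_real (kJ a b t r))"
    using lborel_pair.integrable_snd[OF I] by (simp add: Phi1_inner)
qed



definition L2 :: "real \<Rightarrow> real \<Rightarrow> real \<Rightarrow> real \<Rightarrow> real \<Rightarrow> real" where
  "L2 a b t r s = (if t < s \<and> r < s then (s-t) powr (b-1) / s powr b * (1 / s powr a) * (s-r) powr (a-1) else 0)"

lemma L2_nonneg: "L2 a b t r s \<ge> 0" unfolding L2_def by auto

lemma Lk_L2: "Lk a b t r = (\<integral>\<^sup>+s. ennreal (L2 a b t r s) \<partial>lborel)"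
  unfolding Lk_def L2_def by (intro nn_integral_cong) (auto simp: indicator_def)

definition Phi2 :: "real \<Rightarrow> real \<Rightarrow> real \<Rightarrow> (real \<Rightarrow> complex) \<Rightarrow> real \<Rightarrow> real \<Rightarrow> complex" where
  "Phi2 a b t f s r = (if t < s \<and> 0 < r \<and> r < s then
       complex_of_real ((s-t) powr (b-1) / s powr b * (1 / s powr a) * (s-r) powr (a-1)) * f r else 0)"

lemma Phi2_alt: "Phi2 a b t f s r = complex_of_real (indicator {0<..} r * L2 a b t r s) * f r"
  unfolding Phi2_def L2_def by (auto simp: indicator_def)

lemma Ces_star_Ces_eq:
  fixes f :: "real \<Rightarrow> complex"
  shows "Ces_star b (Ces a f) t = complex_of_real b * (complex_of_real a * (\<integral>s. \<integral>r. Phi2 a b t f s r \<partial>lborel \<partial>lborel))"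
proof -
  have "indicator {t<..} s *\<^sub>R (complex_of_real ((s - t) powr (b - 1) / s powr b) * Ces a f s)
      = complex_of_real a * (\<integral>r. Phi2 a b t f s r \<partial>lborel)" for s
  proof (cases "s \<in> {t<..}")
    case True
    define X where "X = (s - t) powr (b - 1) / s powr b"
    define Z where "Z = (\<integral>r. indicator {0<..<s} r *\<^sub>R (complex_of_real ((s - r) powr (a - 1)) * f r) \<partial>lborel)"
    have "indicator {t<..} s *\<^sub>R (complex_of_real ((s - t) powr (b - 1) / s powr b) * Ces a f s)
        = complex_of_real X * (complex_of_real (a / s powr a) * Z)"
      using True by (simp add: Ces_def set_lebesgue_integral_def X_def Z_def)
    also have "\<dots> = complex_of_real a * (complex_of_real (X * (1 / s powr a)) * Z)"
      by (simp add: mult_ac)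
    also have "complex_of_real (X * (1 / s powr a)) * Z
        = (\<integral>r. complex_of_real (X * (1 / s powr a)) * (indicator {0<..<s} r *\<^sub>R (complex_of_real ((s - r) powr (a - 1)) * f r)) \<partial>lborel)"
      unfolding Z_def by (rule integral_mult_right_zero[symmetric])
    also have "\<dots> = (\<integral>r. Phi2 a b t f s r \<partial>lborel)"
      using True by (intro Bochner_Integration.integral_cong) (auto simp: Phi2_def indicator_def X_def)
    finally show ?thesis .
  next
    case False
    hence "Phi2 a b t f s r = 0" for r by (auto simp: Phi2_def)
    thus ?thesis using False by simp
  qed
  hence "(LINT s:{t<..}|lborel. complex_of_real ((s - t) powr (b - 1) / s powr b) * Ces a f s)
      = (\<integral>s. complex_of_real a * (\<integral>r. Phi2 a b t f s r \<partial>lborel) \<partial>lborel)"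
    unfolding set_lebesgue_integral_def by simp
  also have "\<dots> = complex_of_real a * (\<integral>s. \<integral>r. Phi2 a b t f s r \<partial>lborel \<partial>lborel)" by simp
  finally show ?thesis unfolding Ces_star_def by simp
qed

lemma Phi2_meas[measurable]:
  fixes f :: "real \<Rightarrow> complex"
  assumes [measurable]: "f \<in> borel_measurable lborel"
  shows "(\<lambda>(s, r). Phi2 a b t f s r) \<in> borel_measurable (lborel \<Otimes>\<^sub>M lborel)"
  unfolding Phi2_def by measurable

lemma Phi2_integrable:
  fixes f :: "real \<Rightarrow> complex"
  assumes fm[measurable]: "f \<in> borel_measurable lborel" and Nf: "N a b f t \<noteq> \<infinity>" and t: "t > 0"
  shows "integrable (lborel \<Otimes>\<^sub>M lborel) (\<lambda>(s, r). Phi2 a b t f s r)"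
proof (rule integrableI_bounded)
  show "(\<lambda>(s, r). Phi2 a b t f s r) \<in> borel_measurable (lborel \<Otimes>\<^sub>M lborel)" by (rule Phi2_meas[OF fm])
  have m: "(\<lambda>x. ennreal (norm (case x of (s, r) \<Rightarrow> Phi2 a b t f s r))) \<in> borel_measurable (lborel \<Otimes>\<^sub>M lborel)"
    using Phi2_meas[OF fm] by measurable
  have "(\<integral>\<^sup>+x. ennreal (norm (case x of (s, r) \<Rightarrow> Phi2 a b t f s r)) \<partial>(lborel \<Otimes>\<^sub>M lborel))
      = (\<integral>\<^sup>+r. \<integral>\<^sup>+s. ennreal (norm (Phi2 a b t f s r)) \<partial>lborel \<partial>lborel)"
    using lborel_pair.nn_integral_snd[OF m] by simp
  also have "\<dots> = (\<integral>\<^sup>+r. ennreal (t powr (-a)) * (ennreal (norm (f r) * r powr (-b)) * Jn a b t r) \<partial>lborel)"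
  proof (intro nn_integral_cong)
    fix r :: real
    show "(\<integral>\<^sup>+s. ennreal (norm (Phi2 a b t f s r)) \<partial>lborel) = ennreal (t powr (-a)) * (ennreal (norm (f r) * r powr (-b)) * Jn a b t r)"
    proof (cases "r > 0")
      case True
      have "(\<integral>\<^sup>+s. ennreal (norm (Phi2 a b t f s r)) \<partial>lborel) = (\<integral>\<^sup>+s. ennreal (norm (f r)) * ennreal (L2 a b t r s) \<partial>lborel)"
        using True by (intro nn_integral_cong) (simp add: Phi2_alt norm_mult L2_nonneg ennreal_mult mult_ac)
      also have "\<dots> = ennreal (norm (f r)) * Lk a b t r"
        unfolding Lk_L2 by (rule nn_integral_cmult) (simp add: L2_def)
      also have "\<dots> = ennreal (norm (f r)) * (ennreal (t powr (-a) * r powr (-b)) * Jn a b t r)"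
        using Lk_Jn[OF t True] by simp
      also have "\<dots> = ennreal (t powr (-a)) * (ennreal (norm (f r) * r powr (-b)) * Jn a b t r)"
        by (simp add: ennreal_mult mult_ac)
      finally show ?thesis .
    next
      case False
      hence "Phi2 a b t f s r = 0" for s by (simp add: Phi2_def)
      thus ?thesis using False by (simp add: Jn_nonpos)
    qed
  qed
  also have "\<dots> = ennreal (t powr (-a)) * N a b f t"
    unfolding N_Jn Jn_H
    by (rule nn_integral_cmult) (unfold H_def, measurable)
  finally show "(\<integral>\<^sup>+x. ennreal (norm (case x of (s, r) \<Rightarrow> Phi2 a b t f s r)) \<partial>(lborel \<Otimes>\<^sub>M lborel)) < \<infinity>"
    using Nf by (simp add: less_top ennreal_mult_less_top)
qed

lemma Phi2_inner:
  assumes t: "t > 0"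
  shows "(\<integral>s. Phi2 a b t f s r \<partial>lborel) = f r * complex_of_real (t powr (-a) * kJ a b t r)"
proof (cases "r > 0")
  case True
  have "(\<integral>s. Phi2 a b t f s r \<partial>lborel) = complex_of_real (\<integral>s. L2 a b t r s \<partial>lborel) * f r"
    unfolding Phi2_alt using True by simp
  also have "(\<integral>s. L2 a b t r s \<partial>lborel) = enn2real (Lk a b t r)"
    unfolding Lk_L2 by (rule integral_eq_nn_integral) (auto simp: L2_def)
  also have "\<dots> = t powr (-a) * kJ a b t r"
    unfolding Lk_Jn[OF t True] kJ_def by (simp add: enn2real_mult)
  finally show ?thesis by (simp add: mult_ac)
next
  case False
  hence "Phi2 a b t f s r = 0" for s by (simp add: Phi2_def)
  thus ?thesis using False by (simp add: kJ_nonpos)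
qed

lemma master2:
  fixes f :: "real \<Rightarrow> complex"
  assumes fm[measurable]: "f \<in> borel_measurable lborel" and Nf: "N a b f t \<noteq> \<infinity>" and t: "t > 0"
  shows "Ces_star b (Ces a f) t = complex_of_real (a * b / t powr a) * (\<integral>r. f r * complex_of_real (kJ a b t r) \<partial>lborel)"
proof -
  note I = Phi2_integrable[OF fm Nf t]
  have "(\<integral>s. \<integral>r. Phi2 a b t f s r \<partial>lborel \<partial>lborel) = (\<integral>r. \<integral>s. Phi2 a b t f s r \<partial>lborel \<partial>lborel)"
    using lborel_pair.Fubini_integral[OF I] by simp
  also have "\<dots> = (\<integral>r. complex_of_real (t powr (-a)) * (f r * complex_of_real (kJ a b t r)) \<partial>lborel)"
    by (simp add: Phi2_inner[OF t] mult_ac)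
  also have "\<dots> = complex_of_real (t powr (-a)) * (\<integral>r. f r * complex_of_real (kJ a b t r) \<partial>lborel)"
    by (rule integral_mult_right_zero)
  finally show ?thesis unfolding Ces_star_Ces_eq using t by (simp add: powr_minus_divide)
qed



lemma split_int:
  fixes f :: "real \<Rightarrow> complex" and K k1 k2 :: "real \<Rightarrow> real" and c t :: real
  assumes int: "integrable lborel (\<lambda>r. f r * complex_of_real (K r))" and t: "t > 0"
    and K0: "\<And>r. r \<le> 0 \<Longrightarrow> K r = 0"
    and e1: "\<And>r. r \<in> {0<..<t} \<Longrightarrow> c * K r = k1 r"
    and e2: "\<And>r. r \<in> {t<..} \<Longrightarrow> c * K r = k2 r"
  shows "complex_of_real c * (\<integral>r. f r * complex_of_real (K r) \<partial>lborel)
       = (LINT r:{0<..<t}|lborel. f r * complex_of_real (k1 r)) + (LINT r:{t<..}|lborel. f r * complex_of_real (k2 r))"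
proof -
  define G where "G r = complex_of_real c * (f r * complex_of_real (K r))" for r
  have Gi: "integrable lborel G" unfolding G_def using int by (rule integrable_mult_right)
  have Gm[measurable]: "G \<in> borel_measurable lborel" using Gi by (rule borel_measurable_integrable)
  have "complex_of_real c * (\<integral>r. f r * complex_of_real (K r) \<partial>lborel) = (\<integral>r. G r \<partial>lborel)"
    unfolding G_def by simp
  also have "\<dots> = (\<integral>r. indicator {0<..<t} r *\<^sub>R G r + indicator {t<..} r *\<^sub>R G r \<partial>lborel)"
  proof (rule integral_cong_AE)
    show "(\<lambda>r. indicator {0<..<t} r *\<^sub>R G r + indicator {t<..} r *\<^sub>R G r) \<in> borel_measurable lborel"
      by measurable
    show "AE r in lborel. G r = indicator {0<..<t} r *\<^sub>R G r + indicator {t<..} r *\<^sub>R G r"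
      using AE_lborel_singleton[of t]
    proof eventually_elim
      case (elim r)
      show ?case
      proof (cases "r \<le> 0")
        case True thus ?thesis by (simp add: G_def K0)
      next
        case False thus ?thesis using elim by (auto simp: indicator_def)
      qed
    qed
  qed (rule Gm)
  also have "\<dots> = (\<integral>r. indicator {0<..<t} r *\<^sub>R G r \<partial>lborel) + (\<integral>r. indicator {t<..} r *\<^sub>R G r \<partial>lborel)"
    by (intro Bochner_Integration.integral_add integrable_mult_indicator Gi) auto
  also have "(\<integral>r. indicator {0<..<t} r *\<^sub>R G r \<partial>lborel) = (LINT r:{0<..<t}|lborel. f r * complex_of_real (k1 r))"
    unfolding set_lebesgue_integral_def[symmetric]
    by (rule set_lebesgue_integral_cong) (auto simp: G_def e1[symmetric] mult_ac)
  also have "(\<integral>r. indicator {t<..} r *\<^sub>R G r \<partial>lborel) = (LINT r:{t<..}|lborel. f r * complex_of_real (k2 r))"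
    unfolding set_lebesgue_integral_def[symmetric]
    by (rule set_lebesgue_integral_cong) (auto simp: G_def e2[symmetric] mult_ac)
  finally show ?thesis .
qed

lemma alg4:
  fixes Q R c :: real assumes "Q > 0" "R > 0"
  shows "1/Q * (Q/R) powr (1+c) = Q powr c / R powr (c+1)"
proof -
  have "ln (1/Q * (Q/R) powr (1+c)) = ln (Q powr c / R powr (c+1))"
    using assms by (simp add: ln_mult ln_div ln_powr algebra_simps)
  thus ?thesis using assms by (subst (asm) ln_inj_iff) auto
qed

lemma Ces1_eq:
  assumes t: "t > 0"
  shows "Ces 1 f t = (LINT r:{0<..<t}|lborel. f r * complex_of_real (1/t))"
proof -
  have "(LINT r:{0<..<t}|lborel. f r * complex_of_real (1/t))
      = (LINT r:{0<..<t}|lborel. complex_of_real (1/t) * (complex_of_real ((t-r) powr (1-1)) * f r))"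
    by (rule set_lebesgue_integral_cong) auto
  thus ?thesis unfolding Ces_def using t by simp
qed

lemma Ces_star1_eq:
  assumes t: "t > 0"
  shows "Ces_star 1 f t = (LINT r:{t<..}|lborel. f r * complex_of_real (1/r))"
  unfolding Ces_star_def
  by (simp, rule set_lebesgue_integral_cong) (use t in auto)



theorem theorem3p12:
  fixes p \<alpha> \<beta> :: real and f :: "real \<Rightarrow> complex"
  assumes "p > 1" and "\<alpha> > 0" and "\<beta> > 0" and "Lp_pos p f"
  shows
    "(AE t in lborel. t > 0 \<longrightarrow> Ces \<alpha> (Ces_star \<beta> f) t = Ces_star \<beta> (Ces \<alpha> f) t)
   \<and> (AE t in lborel. t > 0 \<longrightarrow>
        Ces \<alpha> (Ces_star \<beta> f) t =
          complex_of_real \<alpha> * (LINT r:{0<..<t}|lborel. f r *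
             complex_of_real (1 / (t - r) * ((t - r) / t) powr (\<alpha> + \<beta>)
               * hyp2F1 (\<alpha> + \<beta>) \<beta> (\<beta> + 1) (r / t)))
        + complex_of_real \<beta> * (LINT r:{t<..}|lborel. f r *
             complex_of_real (1 / (r - t) * ((r - t) / r) powr (\<alpha> + \<beta>)
               * hyp2F1 (\<alpha> + \<beta>) \<alpha> (\<alpha> + 1) (t / r))))
   \<and> (AE t in lborel. t > 0 \<longrightarrow>
        Ces 1 (Ces_star \<beta> f) t =
          Ces 1 f t + complex_of_real \<beta> * (LINT r:{t<..}|lborel. f r *
             complex_of_real ((r - t) powr \<beta> / r powr (\<beta> + 1)
               * hyp2F1 (\<beta> + 1) 1 2 (t / r))))
   \<and> (AE t in lborel. t > 0 \<longrightarrow>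
        Ces \<alpha> (Ces_star 1 f) t =
          complex_of_real \<alpha> * (LINT r:{0<..<t}|lborel. f r *
             complex_of_real ((t - r) powr \<alpha> / t powr (\<alpha> + 1)
               * hyp2F1 (\<alpha> + 1) 1 2 (r / t)))
          + Ces_star 1 f t)
   \<and> (AE t in lborel. t > 0 \<longrightarrow>
        Ces 1 (Ces_star 1 f) t = Ces 1 f t + Ces_star 1 f t
        \<and> Ces 1 f t + Ces_star 1 f t = Ces_star 1 (Ces 1 f) t)"
proof -
  have fm[measurable]: "f \<in> borel_measurable lborel" using assms(4) by (simp add: Lp_pos_def)
  have a: "\<alpha> > 0" and b: "\<beta> > 0" using assms by auto
  note AE1 = N_AE[OF assms(1) a b assms(4)]
  note AE2 = N_AE[OF assms(1) zero_less_one b assms(4)]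
  note AE3 = N_AE[OF assms(1) a zero_less_one assms(4)]
  note AE4 = N_AE[OF assms(1) zero_less_one zero_less_one assms(4)]
  have pull: "\<And>A c X. (LINT r:A|lborel. f r * complex_of_real (c * X r)) = complex_of_real c * (LINT r:A|lborel. f r * complex_of_real (X r))"
  proof -
    fix A c and X :: "real \<Rightarrow> real"
    have "\<And>r. f r * complex_of_real (c * X r) = complex_of_real c * (f r * complex_of_real (X r))" by simp
    thus "(LINT r:A|lborel. f r * complex_of_real (c * X r)) = complex_of_real c * (LINT r:A|lborel. f r * complex_of_real (X r))"
      by (simp only: set_integral_mult_right)
  qed
  have main: "(Ces \<alpha> (Ces_star \<beta> f) t = Ces_star \<beta> (Ces \<alpha> f) t)
   \<and> (Ces \<alpha> (Ces_star \<beta> f) t =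
          complex_of_real \<alpha> * (LINT r:{0<..<t}|lborel. f r *
             complex_of_real (1 / (t - r) * ((t - r) / t) powr (\<alpha> + \<beta>)
               * hyp2F1 (\<alpha> + \<beta>) \<beta> (\<beta> + 1) (r / t)))
        + complex_of_real \<beta> * (LINT r:{t<..}|lborel. f r *
             complex_of_real (1 / (r - t) * ((r - t) / r) powr (\<alpha> + \<beta>)
               * hyp2F1 (\<alpha> + \<beta>) \<alpha> (\<alpha> + 1) (t / r))))
   \<and> (Ces 1 (Ces_star \<beta> f) t =
          Ces 1 f t + complex_of_real \<beta> * (LINT r:{t<..}|lborel. f r *
             complex_of_real ((r - t) powr \<beta> / r powr (\<beta> + 1)
               * hyp2F1 (\<beta> + 1) 1 2 (t / r))))
   \<and> (Ces \<alpha> (Ces_star 1 f) t =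
          complex_of_real \<alpha> * (LINT r:{0<..<t}|lborel. f r *
             complex_of_real ((t - r) powr \<alpha> / t powr (\<alpha> + 1)
               * hyp2F1 (\<alpha> + 1) 1 2 (r / t)))
          + Ces_star 1 f t)
   \<and> (Ces 1 (Ces_star 1 f) t = Ces 1 f t + Ces_star 1 f t
        \<and> Ces 1 f t + Ces_star 1 f t = Ces_star 1 (Ces 1 f) t)"
    if t: "t > 0" and N1: "N \<alpha> \<beta> f t \<noteq> \<infinity>" and N2: "N 1 \<beta> f t \<noteq> \<infinity>"
      and N3: "N \<alpha> 1 f t \<noteq> \<infinity>" and N4: "N 1 1 f t \<noteq> \<infinity>" for t
  proof -
    have kJ0: "\<And>a b r. r \<le> 0 \<Longrightarrow> kJ a b t r = 0" by (rule kJ_nonpos)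
    have P1: "Ces \<alpha> (Ces_star \<beta> f) t = Ces_star \<beta> (Ces \<alpha> f) t"
      using master1(1)[OF fm N1] master2[OF fm N1 t] by simp
    have P2: "Ces \<alpha> (Ces_star \<beta> f) t =
          complex_of_real \<alpha> * (LINT r:{0<..<t}|lborel. f r *
             complex_of_real (1 / (t - r) * ((t - r) / t) powr (\<alpha> + \<beta>)
               * hyp2F1 (\<alpha> + \<beta>) \<beta> (\<beta> + 1) (r / t)))
        + complex_of_real \<beta> * (LINT r:{t<..}|lborel. f r *
             complex_of_real (1 / (r - t) * ((r - t) / r) powr (\<alpha> + \<beta>)
               * hyp2F1 (\<alpha> + \<beta>) \<alpha> (\<alpha> + 1) (t / r)))"
      unfolding master1(1)[OF fm N1] pull[symmetric]
    proof (rule split_int[OF master1(2)[OF fm N1] t kJ0])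
      fix r assume r: "r \<in> {0<..<t}"
      show "\<alpha> * \<beta> / t powr \<alpha> * kJ \<alpha> \<beta> t r = \<alpha> * (1 / (t - r) * ((t - r) / t) powr (\<alpha> + \<beta>) * hyp2F1 (\<alpha> + \<beta>) \<beta> (\<beta> + 1) (r / t))"
        unfolding kJ_def by (rule KL) (use a b r in auto)
    next
      fix r assume r: "r \<in> {t<..}"
      show "\<alpha> * \<beta> / t powr \<alpha> * kJ \<alpha> \<beta> t r = \<beta> * (1 / (r - t) * ((r - t) / r) powr (\<alpha> + \<beta>) * hyp2F1 (\<alpha> + \<beta>) \<alpha> (\<alpha> + 1) (t / r))"
        unfolding kJ_def by (rule KG) (use a b r t in auto)
    qed
    have P3: "Ces 1 (Ces_star \<beta> f) t =
          Ces 1 f t + complex_of_real \<beta> * (LINT r:{t<..}|lborel. f r *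
             complex_of_real ((r - t) powr \<beta> / r powr (\<beta> + 1)
               * hyp2F1 (\<beta> + 1) 1 2 (t / r)))"
      unfolding master1(1)[OF fm N2] pull[symmetric] Ces1_eq[OF t, of f]
    proof (rule split_int[OF master1(2)[OF fm N2] t kJ0])
      fix r assume r: "r \<in> {0<..<t}"
      show "1 * \<beta> / t powr 1 * kJ 1 \<beta> t r = 1 / t"
        unfolding kJ_def by (rule K1_lt) (use b r in auto)
    next
      fix r assume r: "r \<in> {t<..}"
      have "1 * \<beta> / t powr 1 * kJ 1 \<beta> t r = \<beta> * (1/(r-t) * ((r-t)/r) powr (1+\<beta>) * hyp2F1 (1+\<beta>) 1 (1+1) (t/r))"
        unfolding kJ_def by (rule KG) (use b r t in auto)
      also have "\<dots> = \<beta> * ((r - t) powr \<beta> / r powr (\<beta> + 1) * hyp2F1 (\<beta> + 1) 1 2 (t / r))"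
        using alg4[of "r-t" r \<beta>] r t by (simp add: add.commute)
      finally show "1 * \<beta> / t powr 1 * kJ 1 \<beta> t r = \<beta> * ((r - t) powr \<beta> / r powr (\<beta> + 1) * hyp2F1 (\<beta> + 1) 1 2 (t / r))" .
    qed
    have P4: "Ces \<alpha> (Ces_star 1 f) t =
          complex_of_real \<alpha> * (LINT r:{0<..<t}|lborel. f r *
             complex_of_real ((t - r) powr \<alpha> / t powr (\<alpha> + 1)
               * hyp2F1 (\<alpha> + 1) 1 2 (r / t)))
          + Ces_star 1 f t"
      unfolding master1(1)[OF fm N3] pull[symmetric] Ces_star1_eq[OF t]
    proof (rule split_int[OF master1(2)[OF fm N3] t kJ0])
      fix r assume r: "r \<in> {0<..<t}"
      have "\<alpha> * 1 / t powr \<alpha> * kJ \<alpha> 1 t r = \<alpha> * (1/(t-r) * ((t-r)/t) powr (\<alpha>+1) * hyp2F1 (\<alpha>+1) 1 (1+1) (r/t))"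
        unfolding kJ_def by (rule KL) (use a r in auto)
      also have "\<dots> = \<alpha> * ((t - r) powr \<alpha> / t powr (\<alpha> + 1) * hyp2F1 (\<alpha> + 1) 1 2 (r / t))"
        using alg4[of "t-r" t \<alpha>] r t by (simp add: add.commute)
      finally show "\<alpha> * 1 / t powr \<alpha> * kJ \<alpha> 1 t r = \<alpha> * ((t - r) powr \<alpha> / t powr (\<alpha> + 1) * hyp2F1 (\<alpha> + 1) 1 2 (r / t))" .
    next
      fix r assume r: "r \<in> {t<..}"
      show "\<alpha> * 1 / t powr \<alpha> * kJ \<alpha> 1 t r = 1 / r"
        unfolding kJ_def by (rule K1_gt) (use a r t in auto)
    qed
    have P5a: "complex_of_real (1 * 1 / t powr 1) * (\<integral>r. f r * complex_of_real (kJ 1 1 t r) \<partial>lborel)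
        = Ces 1 f t + Ces_star 1 f t"
      unfolding Ces1_eq[OF t] Ces_star1_eq[OF t]
    proof (rule split_int[OF master1(2)[OF fm N4] t kJ0])
      fix r assume r: "r \<in> {0<..<t}"
      show "1 * 1 / t powr 1 * kJ 1 1 t r = 1 / t"
        unfolding kJ_def by (rule K1_lt) (use r in auto)
    next
      fix r assume r: "r \<in> {t<..}"
      show "1 * 1 / t powr 1 * kJ 1 1 t r = 1 / r"
        unfolding kJ_def by (rule K1_gt) (use r t in auto)
    qed
    have P5: "Ces 1 (Ces_star 1 f) t = Ces 1 f t + Ces_star 1 f t
        \<and> Ces 1 f t + Ces_star 1 f t = Ces_star 1 (Ces 1 f) t"
      using master1(1)[OF fm N4] master2[OF fm N4 t] P5a by simp
    show ?thesis using P1 P2 P3 P4 P5 by blast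
  qed
  have AEN: "AE t in lborel. t > 0 \<longrightarrow> N \<alpha> \<beta> f t \<noteq> \<infinity> \<and> N 1 \<beta> f t \<noteq> \<infinity> \<and> N \<alpha> 1 f t \<noteq> \<infinity> \<and> N 1 1 f t \<noteq> \<infinity>"
    using AE1 AE2 AE3 AE4 by eventually_elim auto
  show ?thesis
    by (intro conjI; rule eventually_mono[OF AEN]; use main in blast)
qed


end
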